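(* Let $W$ be a (1-safe) DAW-net and $\mathrm{bc}(W)$ its $\mathcal{BC}$ encoding. For any $\ell\ge0$, if $\rho=(M_0,\eta_0)\xrightarrow{t_0}(M_1,\eta_1)\xrightarrow{t_1}\cdots\xrightarrow{t_{\ell-1}}(M_\ell,\eta_\ell)$ is a sequence of valid firings of $W$ of length $\ell$ with $(M_0,\eta_0)=(M_s,\eta_s)$ the initial state, then $\bigcup_{i=0}^{\ell}\Phi_i(\rho)$ is a stable model of $P_\ell(\mathrm{bc}(W))$.
   Context: **DAW-nets.** Data model $\mathcal{D}=(\mathcal{V},\Delta,\mathrm{dm},\mathrm{ord})$: variables, finite domains $\Delta_i$ assigned by total surjective $\mathrm{dm}$, partial orders $\le_{\Delta_i}$ on some domains. Assignments: partial $\eta$ with $\eta(v)\in\mathrm{dm}(v)$. Guards $\Phi::=\mathit{true}\mid\mathrm{def}(v)\mid t_1=t_2\mid t_1\le t_2\mid\neg\Phi\mid\Phi\wedge\Phi$ ($t_i$ variables or constants), with $t[\eta]=\eta(t)$ for variables on which $\eta$ is defined and $t$ otherwise: $\mathrm{def}(v)$ iff $\eta(v)$ defined; $t_1=t_2$ iff $t_1[\eta],t_2[\eta]$ are constants and equal; $t_1\le t_2$ iff both lie in some ordered $\Delta_i$ and $t_1[\eta]\le_{\Delta_i}t_2[\eta]$. A DAW-net $W=\langle\mathcal{D},(P,T,F),\mathrm{wr},\mathrm{gd}\rangle$ consists of a workflow Petri net with places $\mathit{start},\mathit{sink}$ (presets ${}^\bullet t$, postsets $t^\bullet$), partial functions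 $\mathrm{wr}(t)$ with $\mathrm{wr}(t)(v)\subseteq\mathrm{dm}(v)$, and guards $\mathrm{gd}(t)$. A firing $(M,\eta)\xrightarrow{t}(M',\eta')$ is valid iff $\{p\mid M(p)>0\}\supseteq{}^\bullet t$; $\mathcal{D},\eta\models\mathrm{gd}(t)$; $M'(p)=M(p)-1$ on ${}^\bullet t\setminus t^\bullet$, $M(p)+1$ on $t^\bullet\setminus{}^\bullet t$, else $M(p)$; $\mathrm{dom}(\eta')=\mathrm{dom}(\eta)\cup\{v\mid\mathrm{wr}(t)(v)\neq\emptyset\}\setminus\{v\mid\mathrm{wr}(t)(v)=\emptyset\}$, $\eta'(v)\in\mathrm{wr}(t)(v)$ for $v\in\mathrm{dom}(\mathrm{wr}(t))$, else $\eta'(v)=\eta(v)$. Initial state $(M_s,\eta_s)$: one token in $\mathit{start}$, none elsewhere, $\eta_s$ empty. $W$ is assumed 1-safe. $\mathcal{V}'$: finite set of variables of $W$; $\mathrm{adm}(v)=\bigcup_t\mathrm{wr}(t)(v)$. **$\mathcal{BC}$ semantics.** Fluents have finite domains; laws: dynamic "$A_0$ after $A'_1,\dots,A'_n$ ifcons $A_{n+1},\dots,A_m$" ($A_0$ an atom $f=v$ or false; $A'_j$ atoms or action constants), static "$A_0$ if ... ifcons ...", and "initially $f=v$". $P_\ell(B)$ is the disjunctive program with classical negation $\neg$ and default negation $\sim$ containing: each static law as $i{:}A_0\leftarrow i{:}A_1,\dots,i{:}A_n,\sim\neg(i{:}A_{n+1}),\dots,\sim\neg(i{:}A_m)$ for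 $0\le i\le\ell$; each dynamic law as $i{+}1{:}A_0\leftarrow i{:}A'_1,\dots,i{:}A'_n,\sim\neg(i{+}1{:}A_{n+1}),\dots,\sim\neg(i{+}1{:}A_m)$ for $0\le i<\ell$ (a constraint if $A_0$ is false); the fact $0{:}f=v$ for each "initially $f=v$"; $0{:}f=v\vee\neg(0{:}f=v)$ for all fluents and values; $i{:}a\vee\neg(i{:}a)$ for action constants and $i<\ell$; and for $i\le\ell$ and each fluent $f$ with domain $v_1,\dots,v_k$: $\leftarrow\sim(i{:}f=v_1),\dots,\sim(i{:}f=v_k)$ and $\neg(i{:}f=v)\leftarrow i{:}f=w$ for $v\neq w$. Stable models are answer sets. **The encoding $\mathrm{bc}(W)$.** Fluents $v\in\mathcal{V}'$ with domain $\mathrm{adm}(v)\cup\{\mathrm{null}\}$, Boolean fluents $p\in P$ and $\mathit{trans}$; action constants $t\in T$. Laws: "$v=o$ after $v=o$ ifcons $v=o$" ($o\in\mathrm{adm}(v)\cup\{\mathrm{null}\}$); "$p=o$ after $p=o$ ifcons $p=o$" ($o$ Boolean); for each $t$: "$p=\mathrm{false}$ after $t$" ($p\in{}^\bullet t\setminus t^\bullet$); "$p=\mathrm{true}$ after $t$" ($p\in t^\bullet\setminus{}^\bullet t$); "$v=d$ after $t$ ifcons $v=d$" ($d\in\mathrm{wr}(t)(v)$); "$v=\mathrm{null}$ after $t$" (if $\mathrm{wr}(t)(v)=\emptyset$); "false after $t$ ifcons $v=d$" (if $\mathrm{wr}(t)(v)\neq\emptyset$, $d\in\{\mathrm{null}\}\cup\mathrm{adm}(v)\setminus\mathrm{wr}(t)(v)$);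 "false after $t,s$" ($t\neq s$); "false after $t,p=\mathrm{false}$" ($p\in{}^\bullet t$); "$\mathit{trans}=\mathrm{true}$ after $t$"; "initially $\mathit{start}=\mathrm{true}$", "initially $p=\mathrm{false}$" ($p\neq\mathit{start}$), "initially $v=\mathrm{null}$", "initially $\mathit{trans}=\mathrm{true}$". For each $t$ with $\mathrm{gd}(t)\not\equiv\mathit{true}$, for a chosen formula $\bigvee_{k}t^k_1\wedge\dots\wedge t^k_{n_k}$ equivalent over $\mathcal{D}$ to $\neg\mathrm{gd}(t)$ whose terms are $v=o$ or $\neg\mathrm{def}(v)$, the laws "false after $t,[\![t^k_1]\!],\dots,[\![t^k_{n_k}]\!]$", where $[\![v=o]\!]=(v=o)$ and $[\![\neg\mathrm{def}(v)]\!]=(v=\mathrm{null})$. **The sets $\Phi_i(\rho)$.** For $0\le i\le\ell$, $\Phi_i(\rho)=\Phi^\nu_i(\rho)\cup\Phi^\tau_i(\rho)$ where $\Phi^\nu_i(\rho)=\{i{:}p=\mathrm{true},\neg(i{:}p=\mathrm{false})\mid M_i(p)>0\}\cup\{i{:}p=\mathrm{false},\neg(i{:}p=\mathrm{true})\mid M_i(p)=0\}\cup\{i{:}v=o,\neg(i{:}v=\mathrm{null})\mid v\in\mathcal{V}',\eta_i(v)=o\}\cup\{i{:}v=\mathrm{null}\mid\eta_i(v)\text{ undefined}\}\cup\{\neg(i{:}v=o)\mid v\in\mathcal{V}',o\in\mathrm{adm}(v),\eta_i(v)\neq o\text{ or undefined}\}\cup\{i{:}\mathit{trans}=\mathrm{true},\neg(i{:}\mathit{trans}=\mathrm{false})\}$,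 and $\Phi^\tau_i(\rho)=\emptyset$ for $i\ge\ell$, $\{i{:}t_i\}\cup\{\neg(i{:}t)\mid t\in T,t\neq t_i\}$ for $i<\ell$. *)

theory Defs
  imports Main
begin

record ('v, 'd) data_model =
  dvars :: "'v set"
  dm    :: "'v \<Rightarrow> 'd set"
  dord  :: "'d set \<Rightarrow> ('d \<times> 'd) set option" \<comment> \<open>partial order on some domains\<close>

definition domains :: "('v, 'd) data_model \<Rightarrow> 'd set set" where
  "domains D = dm D ` dvars D"

definition wf_data_model :: "('v, 'd) data_model \<Rightarrow> bool" where
  "wf_data_model D \<longleftrightarrow>
     (\<forall>v\<in>dvars D. finite (dm D v)) \<and>
     (\<forall>X R. dord D X = Some R \<longrightarrow> X \<in> domains D \<and> partial_order_on X R)"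

type_synonym ('v, 'd) assignment = "'v \<Rightarrow> 'd option"

definition is_assignment :: "('v, 'd) data_model \<Rightarrow> ('v, 'd) assignment \<Rightarrow> bool" where
  "is_assignment D \<eta> \<longleftrightarrow> dom \<eta> \<subseteq> dvars D \<and> (\<forall>v d. \<eta> v = Some d \<longrightarrow> d \<in> dm D v)"

datatype ('v, 'd) gterm = GVar 'v | GConst 'd

datatype ('v, 'd) guard =
    GTrue
  | GDef 'v
  | GEq "('v, 'd) gterm" "('v, 'd) gterm"
  | GLeq "('v, 'd) gterm" "('v, 'd) gterm"
  | GNot "('v, 'd) guard"
  | GAnd "('v, 'd) guard" "('v, 'd) guard"

fun tval :: "('v, 'd) assignment \<Rightarrow> ('v, 'd) gterm \<Rightarrow> 'd option" where
  "tval \<eta> (GVar v) = \<eta> v"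
| "tval \<eta> (GConst c) = Some c"

fun gsat :: "('v, 'd) data_model \<Rightarrow> ('v, 'd) assignment \<Rightarrow> ('v, 'd) guard \<Rightarrow> bool" where
  "gsat D \<eta> GTrue = True"
| "gsat D \<eta> (GDef v) = (\<eta> v \<noteq> None)"
| "gsat D \<eta> (GEq t1 t2) = (\<exists>c1 c2. tval \<eta> t1 = Some c1 \<and> tval \<eta> t2 = Some c2 \<and> c1 = c2)"
| "gsat D \<eta> (GLeq t1 t2) = (\<exists>c1 c2 X R. tval \<eta> t1 = Some c1 \<and> tval \<eta> t2 = Some c2 \<and>
       X \<in> domains D \<and> dord D X = Some R \<and> c1 \<in> X \<and> c2 \<in> X \<and> (c1, c2) \<in> R)"
| "gsat D \<eta> (GNot g) = (\<not> gsat D \<eta> g)"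
| "gsat D \<eta> (GAnd g1 g2) = (gsat D \<eta> g1 \<and> gsat D \<eta> g2)"

fun tvars :: "('v, 'd) gterm \<Rightarrow> 'v set" where
  "tvars (GVar v) = {v}"
| "tvars (GConst c) = {}"

fun gvars :: "('v, 'd) guard \<Rightarrow> 'v set" where
  "gvars GTrue = {}"
| "gvars (GDef v) = {v}"
| "gvars (GEq t1 t2) = tvars t1 \<union> tvars t2"
| "gvars (GLeq t1 t2) = tvars t1 \<union> tvars t2"
| "gvars (GNot g) = gvars g"
| "gvars (GAnd g1 g2) = gvars g1 \<union> gvars g2"

record ('v, 'd, 'p, 't) dawnet =
  dmodel :: "('v, 'd) data_model"
  places :: "'p set"
  trans  :: "'t set"
  flow_in  :: "('p \<times> 't) set"
  flow_out :: "('t \<times> 'p) set"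
  pstart :: 'p
  psink  :: 'p
  wr :: "'t \<Rightarrow> 'v \<Rightarrow> 'd set option"
  gd :: "'t \<Rightarrow> ('v, 'd) guard"

definition preset :: "('v, 'd, 'p, 't) dawnet \<Rightarrow> 't \<Rightarrow> 'p set" where
  "preset W t = {p. (p, t) \<in> flow_in W}"

definition postset :: "('v, 'd, 'p, 't) dawnet \<Rightarrow> 't \<Rightarrow> 'p set" where
  "postset W t = {p. (t, p) \<in> flow_out W}"

definition net_edges :: "('v, 'd, 'p, 't) dawnet \<Rightarrow> (('p + 't) \<times> ('p + 't)) set" where
  "net_edges W = {(Inl p, Inr t) | p t. (p, t) \<in> flow_in W} \<union> {(Inr t, Inl p) | t p. (t, p) \<in> flow_out W}"

definition wf_dawnet :: "('v, 'd, 'p, 't) dawnet \<Rightarrow> bool" where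
  "wf_dawnet W \<longleftrightarrow>
     wf_data_model (dmodel W) \<and>
     finite (places W) \<and> finite (trans W) \<and>
     flow_in W \<subseteq> places W \<times> trans W \<and> flow_out W \<subseteq> trans W \<times> places W \<and>
     pstart W \<in> places W \<and> psink W \<in> places W \<and>
     (\<forall>t. (t, pstart W) \<notin> flow_out W) \<and> (\<forall>t. (psink W, t) \<notin> flow_in W) \<and>
     (\<forall>n \<in> Inl ` places W \<union> Inr ` trans W.
        (Inl (pstart W), n) \<in> (net_edges W)\<^sup>* \<and> (n, Inl (psink W)) \<in> (net_edges W)\<^sup>*) \<and>
     (\<forall>t \<in> trans W. dom (wr W t) \<subseteq> dvars (dmodel W) \<and>
        (\<forall>v X. wr W t v = Some X \<longrightarrow> X \<subseteq> dm (dmodel W) v) \<and>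
        gvars (gd W t) \<subseteq> dvars (dmodel W))"

type_synonym ('v, 'd, 'p) state = "('p \<Rightarrow> nat) \<times> ('v, 'd) assignment"

definition fire :: "('v, 'd, 'p, 't) dawnet \<Rightarrow> ('v, 'd, 'p) state \<Rightarrow> 't \<Rightarrow> ('v, 'd, 'p) state \<Rightarrow> bool" where
  "fire W s t s' \<longleftrightarrow> (case (s, s') of ((M, \<eta>), (M', \<eta>')) \<Rightarrow>
     t \<in> trans W \<and>
     preset W t \<subseteq> {p. M p > 0} \<and>
     gsat (dmodel W) \<eta> (gd W t) \<and>
     (\<forall>p. M' p = (if p \<in> preset W t - postset W t then M p - 1
                  else if p \<in> postset W t - preset W t then M p + 1 else M p)) \<and>
     (\<forall>v. case wr W t v of
            None \<Rightarrow> \<eta>' v = \<eta> v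
          | Some X \<Rightarrow> (X = {} \<longrightarrow> \<eta>' v = None) \<and> (X \<noteq> {} \<longrightarrow> (\<exists>d\<in>X. \<eta>' v = Some d))))"

definition init_state :: "('v, 'd, 'p, 't) dawnet \<Rightarrow> ('v, 'd, 'p) state" where
  "init_state W = ((\<lambda>p. if p = pstart W then 1 else 0), Map.empty)"

definition reachable :: "('v, 'd, 'p, 't) dawnet \<Rightarrow> ('v, 'd, 'p) state set" where
  "reachable W = {s. (init_state W, s) \<in> {(s, s'). \<exists>t. fire W s t s'}\<^sup>*}"

definition one_safe :: "('v, 'd, 'p, 't) dawnet \<Rightarrow> bool" where
  "one_safe W \<longleftrightarrow> (\<forall>(M, \<eta>) \<in> reachable W. \<forall>p. M p \<le> 1)"

definition netvars :: "('v, 'd, 'p, 't) dawnet \<Rightarrow> 'v set" where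
  "netvars W = (\<Union>t\<in>trans W. dom (wr W t)) \<union> (\<Union>t\<in>trans W. gvars (gd W t))"

definition adm :: "('v, 'd, 'p, 't) dawnet \<Rightarrow> 'v \<Rightarrow> 'd set" where
  "adm W v = (\<Union>t\<in>trans W. case wr W t v of None \<Rightarrow> {} | Some X \<Rightarrow> X)"

definition is_run :: "('v, 'd, 'p, 't) dawnet \<Rightarrow> nat \<Rightarrow> (nat \<Rightarrow> 'p \<Rightarrow> nat) \<Rightarrow>
    (nat \<Rightarrow> ('v, 'd) assignment) \<Rightarrow> (nat \<Rightarrow> 't) \<Rightarrow> bool" where
  "is_run W l M \<eta> tr \<longleftrightarrow> (M 0, \<eta> 0) = init_state W \<and>
     (\<forall>i<l. fire W (M i, \<eta> i) (tr i) (M (Suc i), \<eta> (Suc i)))"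

section \<open>Action language BC and its translation to logic programs\<close>

datatype ('f, 'x, 'a) bcatom = FAt 'f 'x | Act 'a

datatype ('f, 'x, 'a) bclaw =
    \<comment> \<open>Static: A0 if A1..An ifcons An+1..Am; head None = false\<close>
    Static "('f \<times> 'x) option" "('f \<times> 'x) list" "('f \<times> 'x) list"
    \<comment> \<open>Dynamic: A0 after A1'..An' ifcons An+1..Am; head None = false\<close>
  | Dynamic "('f \<times> 'x) option" "('f, 'x, 'a) bcatom list" "('f \<times> 'x) list"
  | Initially 'f 'x

record ('f, 'x, 'a) action_desc =
  fluents :: "'f set"
  fdom    :: "'f \<Rightarrow> 'x set"
  actions :: "'a set"
  laws    :: "('f, 'x, 'a) bclaw set"

text \<open>Ground atoms i:A; literals with classical negation.\<close>
type_synonym ('f, 'x, 'a) gatom = "nat \<times> ('f, 'x, 'a) bcatom"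

datatype 'at lit = Pos 'at | Neg 'at

text \<open>Rule: disjunctive head, positive body, default-negated body (~L).\<close>
record 'l rule =
  rhead :: "'l set"
  rpos  :: "'l set"
  rneg  :: "'l set"

definition consistent :: "'at lit set \<Rightarrow> bool" where
  "consistent S \<longleftrightarrow> (\<forall>a. \<not> (Pos a \<in> S \<and> Neg a \<in> S))"

text \<open>Gelfond-Lifschitz answer sets of disjunctive programs with classical negation.\<close>
definition reduct :: "'at lit rule set \<Rightarrow> 'at lit set \<Rightarrow> 'at lit rule set" where
  "reduct \<Pi> S = {\<lparr>rhead = rhead r, rpos = rpos r, rneg = {}\<rparr> | r. r \<in> \<Pi> \<and> rneg r \<inter> S = {}}"

definition closed_under :: "'at lit rule set \<Rightarrow> 'at lit set \<Rightarrow> bool" where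
  "closed_under \<Pi> S \<longleftrightarrow> (\<forall>r\<in>\<Pi>. rpos r \<subseteq> S \<longrightarrow> rhead r \<inter> S \<noteq> {}) \<and> (consistent S \<or> S = UNIV)"

definition answer_set :: "'at lit rule set \<Rightarrow> 'at lit set \<Rightarrow> bool" where
  "answer_set \<Pi> S \<longleftrightarrow> closed_under (reduct \<Pi> S) S \<and>
     (\<forall>S'. S' \<subseteq> S \<and> closed_under (reduct \<Pi> S) S' \<longrightarrow> S' = S)"

definition fat :: "nat \<Rightarrow> ('f \<times> 'x) \<Rightarrow> ('f, 'x, 'a) gatom lit" where
  "fat i fx = Pos (i, FAt (fst fx) (snd fx))"

definition nfat :: "nat \<Rightarrow> ('f \<times> 'x) \<Rightarrow> ('f, 'x, 'a) gatom lit" where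
  "nfat i fx = Neg (i, FAt (fst fx) (snd fx))"

definition hd_lits :: "nat \<Rightarrow> ('f \<times> 'x) option \<Rightarrow> ('f, 'x, 'a) gatom lit set" where
  "hd_lits i h = (case h of None \<Rightarrow> {} | Some fx \<Rightarrow> {fat i fx})"

definition law_rules :: "nat \<Rightarrow> ('f, 'x, 'a) bclaw \<Rightarrow> ('f, 'x, 'a) gatom lit rule set" where
  "law_rules l law = (case law of
      Static h body ifc \<Rightarrow>
        {\<lparr>rhead = hd_lits i h, rpos = fat i ` set body, rneg = nfat i ` set ifc\<rparr> | i. i \<le> l}
    | Dynamic h aft ifc \<Rightarrow>
        {\<lparr>rhead = hd_lits (Suc i) h, rpos = (\<lambda>A. Pos (i, A)) ` set aft, rneg = nfat (Suc i) ` set ifc\<rparr> | i. i < l}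
    | Initially f x \<Rightarrow> {\<lparr>rhead = {fat 0 (f, x)}, rpos = {}, rneg = {}\<rparr>})"

definition prog :: "nat \<Rightarrow> ('f, 'x, 'a) action_desc \<Rightarrow> ('f, 'x, 'a) gatom lit rule set" where
  "prog l B =
     (\<Union>law\<in>laws B. law_rules l law) \<union>
     {\<lparr>rhead = {fat 0 (f, x), nfat 0 (f, x)}, rpos = {}, rneg = {}\<rparr> | f x. f \<in> fluents B \<and> x \<in> fdom B f} \<union>
     {\<lparr>rhead = {Pos (i, Act a), Neg (i, Act a)}, rpos = {}, rneg = {}\<rparr> | i a. a \<in> actions B \<and> i < l} \<union>
     {\<lparr>rhead = {}, rpos = {}, rneg = (\<lambda>x. fat i (f, x)) ` fdom B f\<rparr> | i f. f \<in> fluents B \<and> i \<le> l} \<union>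
     {\<lparr>rhead = {nfat i (f, x)}, rpos = {fat i (f, y)}, rneg = {}\<rparr> | i f x y.
         f \<in> fluents B \<and> x \<in> fdom B f \<and> y \<in> fdom B f \<and> x \<noteq> y \<and> i \<le> l}"

datatype ('v, 'p) fluent = FVar 'v | FPlace 'p | FTrans

datatype 'd fval = Val 'd | Null | BV bool

text \<open>Terms of the chosen DNF of the negated guard: v = o or \<not>def(v).\<close>
datatype ('v, 'd) dnf_term = DEq 'v 'd | DUndef 'v

fun dnf_term_sat :: "('v, 'd) assignment \<Rightarrow> ('v, 'd) dnf_term \<Rightarrow> bool" where
  "dnf_term_sat \<eta> (DEq v c) = (\<eta> v = Some c)"
| "dnf_term_sat \<eta> (DUndef v) = (\<eta> v = None)"

definition dnf_sat :: "('v, 'd) assignment \<Rightarrow> ('v, 'd) dnf_term list list \<Rightarrow> bool" where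
  "dnf_sat \<eta> \<phi> \<longleftrightarrow> (\<exists>c\<in>set \<phi>. \<forall>a\<in>set c. dnf_term_sat \<eta> a)"

definition valid_neg_guard_dnf :: "('v, 'd, 'p, 't) dawnet \<Rightarrow> 't \<Rightarrow> ('v, 'd) dnf_term list list \<Rightarrow> bool" where
  "valid_neg_guard_dnf W t \<phi> \<longleftrightarrow>
     (\<forall>\<eta>. is_assignment (dmodel W) \<eta> \<longrightarrow> (dnf_sat \<eta> \<phi> \<longleftrightarrow> \<not> gsat (dmodel W) \<eta> (gd W t)))"

definition guard_trivial :: "('v, 'd, 'p, 't) dawnet \<Rightarrow> 't \<Rightarrow> bool" where
  "guard_trivial W t \<longleftrightarrow> (\<forall>\<eta>. is_assignment (dmodel W) \<eta> \<longrightarrow> gsat (dmodel W) \<eta> (gd W t))"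

fun tr_dnf_term :: "('v, 'd) dnf_term \<Rightarrow> (('v, 'p) fluent, 'd fval, 't) bcatom" where
  "tr_dnf_term (DEq v c) = FAt (FVar v) (Val c)"
| "tr_dnf_term (DUndef v) = FAt (FVar v) Null"

definition bc_fdom :: "('v, 'd, 'p, 't) dawnet \<Rightarrow> ('v, 'p) fluent \<Rightarrow> 'd fval set" where
  "bc_fdom W f = (case f of FVar v \<Rightarrow> Val ` adm W v \<union> {Null} | FPlace p \<Rightarrow> {BV True, BV False}
                  | FTrans \<Rightarrow> {BV True, BV False})"

definition bc_laws :: "('v, 'd, 'p, 't) dawnet \<Rightarrow> ('t \<Rightarrow> ('v, 'd) dnf_term list list) \<Rightarrow>
    (('v, 'p) fluent, 'd fval, 't) bclaw set" where
  "bc_laws W \<phi> =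
     {Dynamic (Some (FVar v, x)) [FAt (FVar v) x] [(FVar v, x)] | v x. v \<in> netvars W \<and> x \<in> bc_fdom W (FVar v)} \<union>
     {Dynamic (Some (FPlace p, BV b)) [FAt (FPlace p) (BV b)] [(FPlace p, BV b)] | p b. p \<in> places W} \<union>
     {Dynamic (Some (FPlace p, BV False)) [Act t] [] | t p. t \<in> trans W \<and> p \<in> preset W t - postset W t} \<union>
     {Dynamic (Some (FPlace p, BV True)) [Act t] [] | t p. t \<in> trans W \<and> p \<in> postset W t - preset W t} \<union>
     {Dynamic (Some (FVar v, Val d)) [Act t] [(FVar v, Val d)] | t v d X.
         t \<in> trans W \<and> wr W t v = Some X \<and> d \<in> X} \<union>
     {Dynamic (Some (FVar v, Null)) [Act t] [] | t v. t \<in> trans W \<and> wr W t v = Some {}} \<union>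
     {Dynamic None [Act t] [(FVar v, x)] | t v X x. t \<in> trans W \<and> wr W t v = Some X \<and> X \<noteq> {} \<and>
         x \<in> {Null} \<union> Val ` (adm W v - X)} \<union>
     {Dynamic None [Act t, Act s] [] | t s. t \<in> trans W \<and> s \<in> trans W \<and> t \<noteq> s} \<union>
     {Dynamic None [Act t, FAt (FPlace p) (BV False)] [] | t p. t \<in> trans W \<and> p \<in> preset W t} \<union>
     {Dynamic (Some (FTrans, BV True)) [Act t] [] | t. t \<in> trans W} \<union>
     {Initially (FPlace (pstart W)) (BV True)} \<union>
     {Initially (FPlace p) (BV False) | p. p \<in> places W \<and> p \<noteq> pstart W} \<union>
     {Initially (FVar v) Null | v. v \<in> netvars W} \<union>
     {Initially FTrans (BV True)} \<union>
     {Dynamic None (Act t # map tr_dnf_term c) [] | t c. t \<in> trans W \<and> \<not> guard_trivial W t \<and> c \<in> set (\<phi> t)}"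

definition bc :: "('v, 'd, 'p, 't) dawnet \<Rightarrow> ('t \<Rightarrow> ('v, 'd) dnf_term list list) \<Rightarrow>
    (('v, 'p) fluent, 'd fval, 't) action_desc" where
  "bc W \<phi> = \<lparr>fluents = FVar ` netvars W \<union> FPlace ` places W \<union> {FTrans},
             fdom = bc_fdom W, actions = trans W, laws = bc_laws W \<phi>\<rparr>"

definition Phi_nu :: "('v, 'd, 'p, 't) dawnet \<Rightarrow> nat \<Rightarrow> ('p \<Rightarrow> nat) \<Rightarrow> ('v, 'd) assignment \<Rightarrow>
    (('v, 'p) fluent, 'd fval, 't) gatom lit set" where
  "Phi_nu W i M \<eta> =
     {l. \<exists>p\<in>places W. M p > 0 \<and> (l = fat i (FPlace p, BV True) \<or> l = nfat i (FPlace p, BV False))} \<union>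
     {l. \<exists>p\<in>places W. M p = 0 \<and> (l = fat i (FPlace p, BV False) \<or> l = nfat i (FPlace p, BV True))} \<union>
     {l. \<exists>v\<in>netvars W. \<exists>c. \<eta> v = Some c \<and> (l = fat i (FVar v, Val c) \<or> l = nfat i (FVar v, Null))} \<union>
     {fat i (FVar v, Null) | v. v \<in> netvars W \<and> \<eta> v = None} \<union>
     {nfat i (FVar v, Val c) | v c. v \<in> netvars W \<and> c \<in> adm W v \<and> \<eta> v \<noteq> Some c} \<union>
     {fat i (FTrans, BV True), nfat i (FTrans, BV False)}"

definition Phi_tau :: "('v, 'd, 'p, 't) dawnet \<Rightarrow> nat \<Rightarrow> nat \<Rightarrow> 't \<Rightarrow>
    (('v, 'p) fluent, 'd fval, 't) gatom lit set" where
  "Phi_tau W l i t = (if l \<le> i then {} else {Pos (i, Act t)} \<union> {Neg (i, Act s) | s. s \<in> trans W \<and> s \<noteq> t})"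

definition Phi :: "('v, 'd, 'p, 't) dawnet \<Rightarrow> nat \<Rightarrow> (nat \<Rightarrow> 'p \<Rightarrow> nat) \<Rightarrow>
    (nat \<Rightarrow> ('v, 'd) assignment) \<Rightarrow> (nat \<Rightarrow> 't) \<Rightarrow> nat \<Rightarrow> (('v, 'p) fluent, 'd fval, 't) gatom lit set" where
  "Phi W l M \<eta> tr i = Phi_nu W i (M i) (\<eta> i) \<union> Phi_tau W l i (tr i)"

end

theory Submission
  imports Defs
begin

lemma cl_reduct: "closed_under (reduct P T) T' \<longleftrightarrow>
  (\<forall>r\<in>P. rneg r \<inter> T = {} \<longrightarrow> rpos r \<subseteq> T' \<longrightarrow> rhead r \<inter> T' \<noteq> {}) \<and> (consistent T' \<or> T' = UNIV)"
  unfolding closed_under_def reduct_def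
  apply (rule conj_cong[OF _ refl])
  apply (rule iffI)
   apply (intro ballI impI)
  subgoal for r
    apply (drule bspec[where x="\<lparr>rhead = rhead r, rpos = rpos r, rneg = {}\<rparr>"])
    by auto
  by auto

locale runctx =
  fixes W :: "('v, 'd, 'p, 't) dawnet"
    and \<phi> :: "'t \<Rightarrow> ('v, 'd) dnf_term list list"
    and l :: nat
    and M :: "nat \<Rightarrow> 'p \<Rightarrow> nat"
    and \<eta> :: "nat \<Rightarrow> ('v, 'd) assignment"
    and tr :: "nat \<Rightarrow> 't"
  assumes wf: "wf_dawnet W"
    and safe: "one_safe W"
    and dnf: "\<forall>t\<in>trans W. \<not> guard_trivial W t \<longrightarrow> valid_neg_guard_dnf W t (\<phi> t)"
    and run: "is_run W l M \<eta> tr"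
begin

lemma stp:
  assumes "i < l"
  shows "tr i \<in> trans W" "preset W (tr i) \<subseteq> {p. M i p > 0}"
    "gsat (dmodel W) (\<eta> i) (gd W (tr i))"
    "M (Suc i) p = (if p \<in> preset W (tr i) - postset W (tr i) then M i p - 1
                  else if p \<in> postset W (tr i) - preset W (tr i) then M i p + 1 else M i p)"
    "case wr W (tr i) v of
            None \<Rightarrow> \<eta> (Suc i) v = \<eta> i v
          | Some X \<Rightarrow> (X = {} \<longrightarrow> \<eta> (Suc i) v = None) \<and> (X \<noteq> {} \<longrightarrow> (\<exists>d\<in>X. \<eta> (Suc i) v = Some d))"
proof -
  have f: "fire W (M i, \<eta> i) (tr i) (M (Suc i), \<eta> (Suc i))" using run assms by (simp add: is_run_def)
  show "tr i \<in> trans W" "preset W (tr i) \<subseteq> {p. M i p > 0}"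
    "gsat (dmodel W) (\<eta> i) (gd W (tr i))" using f by (simp_all add: fire_def)
  show "M (Suc i) p = (if p \<in> preset W (tr i) - postset W (tr i) then M i p - 1
                  else if p \<in> postset W (tr i) - preset W (tr i) then M i p + 1 else M i p)"
    using f unfolding fire_def by simp
  show "case wr W (tr i) v of
            None \<Rightarrow> \<eta> (Suc i) v = \<eta> i v
          | Some X \<Rightarrow> (X = {} \<longrightarrow> \<eta> (Suc i) v = None) \<and> (X \<noteq> {} \<longrightarrow> (\<exists>d\<in>X. \<eta> (Suc i) v = Some d))"
    using f unfolding fire_def by simp
qed

lemma init: "M 0 = (\<lambda>p. if p = pstart W then 1 else 0)" "\<eta> 0 = Map.empty"
  using run by (auto simp: is_run_def init_state_def)

lemma reach: "i \<le> l \<Longrightarrow> (M i, \<eta> i) \<in> reachable W"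
proof (induction i)
  case 0 then show ?case using run by (simp add: reachable_def is_run_def)
next
  case (Suc i)
  then have "(init_state W, (M i, \<eta> i)) \<in> {(s, s'). \<exists>t. fire W s t s'}\<^sup>*" by (simp add: reachable_def)
  moreover have "fire W (M i, \<eta> i) (tr i) (M (Suc i), \<eta> (Suc i))" using run Suc.prems by (simp add: is_run_def)
  ultimately show ?case unfolding reachable_def by (auto intro: rtrancl_into_rtrancl)
qed

lemma safe_i: "i \<le> l \<Longrightarrow> M i p \<le> 1"
  using reach[of i] safe unfolding one_safe_def by fastforce

lemma wr_netvars: "t \<in> trans W \<Longrightarrow> wr W t v = Some X \<Longrightarrow> v \<in> netvars W"
  by (auto simp: netvars_def)

lemma wr_adm: "t \<in> trans W \<Longrightarrow> wr W t v = Some X \<Longrightarrow> X \<subseteq> adm W v"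
  by (auto simp: adm_def intro!: bexI[of _ t])

lemma wr_wf: "t \<in> trans W \<Longrightarrow> wr W t v = Some X \<Longrightarrow> v \<in> dvars (dmodel W) \<and> X \<subseteq> dm (dmodel W) v"
  using wf unfolding wf_dawnet_def by blast

lemma pre_places: "p \<in> preset W t \<Longrightarrow> p \<in> places W"
  using wf unfolding wf_dawnet_def preset_def by blast

lemma post_places: "p \<in> postset W t \<Longrightarrow> p \<in> places W"
  using wf unfolding wf_dawnet_def postset_def by blast

lemma eta_inv: "i \<le> l \<Longrightarrow> \<eta> i v = Some c \<Longrightarrow>
   c \<in> adm W v \<and> v \<in> netvars W \<and> v \<in> dvars (dmodel W) \<and> c \<in> dm (dmodel W) v"
proof (induction i arbitrary: c)
  case 0 then show ?case by (simp add: init)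
next
  case (Suc i)
  have il: "i < l" using Suc.prems by simp
  note s = stp(5)[OF il, of v]
  show ?case
  proof (cases "wr W (tr i) v")
    case None
    then have "\<eta> i v = Some c" using s Suc.prems by simp
    then show ?thesis using Suc.IH il by simp
  next
    case (Some X)
    with s Suc.prems have "c \<in> X" by (cases "X = {}") auto
    then show ?thesis using Some wr_netvars wr_adm wr_wf stp(1)[OF il] by blast
  qed
qed

lemma is_asg: "i \<le> l \<Longrightarrow> is_assignment (dmodel W) (\<eta> i)"
  unfolding is_assignment_def using eta_inv by blast

definition Flu where "Flu = FVar ` netvars W \<union> FPlace ` places W \<union> {FTrans}"

definition val :: "nat \<Rightarrow> ('v, 'p) fluent \<Rightarrow> 'd fval" where
  "val i f = (case f of FVar v \<Rightarrow> (case \<eta> i v of None \<Rightarrow> Null | Some c \<Rightarrow> Val c)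
      | FPlace p \<Rightarrow> BV (0 < M i p) | FTrans \<Rightarrow> BV True)"

definition S where "S = (\<Union>i\<in>{0..l}. Phi W l M \<eta> tr i)"

lemma memPos: "Pos (i, FAt f x) \<in> S \<longleftrightarrow> i \<le> l \<and> f \<in> Flu \<and> x = val i f"
  by (cases f) (auto simp: S_def Phi_def Phi_nu_def Phi_tau_def fat_def nfat_def Flu_def val_def split: option.splits)

lemma memNeg: "Neg (i, FAt f x) \<in> S \<longleftrightarrow> i \<le> l \<and> f \<in> Flu \<and> x \<in> bc_fdom W f \<and> x \<noteq> val i f"
  by (cases f) (auto simp: S_def Phi_def Phi_nu_def Phi_tau_def fat_def nfat_def Flu_def val_def bc_fdom_def split: option.splits)

lemma memPosA: "Pos (i, Act a) \<in> S \<longleftrightarrow> i < l \<and> a = tr i"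
  by (auto simp: S_def Phi_def Phi_nu_def Phi_tau_def fat_def nfat_def)

lemma memNegA: "Neg (i, Act a) \<in> S \<longleftrightarrow> i < l \<and> a \<in> trans W \<and> a \<noteq> tr i"
  by (auto simp: S_def Phi_def Phi_nu_def Phi_tau_def fat_def nfat_def)

lemma M_pre: "i < l \<Longrightarrow> p \<in> preset W (tr i) - postset W (tr i) \<Longrightarrow> M (Suc i) p = 0"
  using stp(2)[of i] stp(4)[of i p] safe_i[of i p] by force

lemma M_post: "i < l \<Longrightarrow> p \<in> postset W (tr i) - preset W (tr i) \<Longrightarrow> 0 < M (Suc i) p"
  using stp(4)[of i p] by simp

lemma M_same: "i < l \<Longrightarrow> p \<notin> preset W (tr i) - postset W (tr i) \<Longrightarrow>
   p \<notin> postset W (tr i) - preset W (tr i) \<Longrightarrow> M (Suc i) p = M i p"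
  using stp(4)[of i p] by auto

lemma val_dom: "i \<le> l \<Longrightarrow> f \<in> Flu \<Longrightarrow> val i f \<in> bc_fdom W f"
  using eta_inv by (auto simp: Flu_def val_def bc_fdom_def split: option.splits fluent.splits)

lemma cons: "consistent S"
  unfolding consistent_def
proof (intro allI)
  fix a :: "(('v, 'p) fluent, 'd fval, 't) gatom"
  obtain i A where a: "a = (i, A)" by (cases a)
  show "\<not> (Pos a \<in> S \<and> Neg a \<in> S)" unfolding a
    by (cases A) (auto simp: memPos memNeg memPosA memNegA)
qed

lemma Flu_simps[simp]: "FVar v \<in> Flu \<longleftrightarrow> v \<in> netvars W" "FPlace p \<in> Flu \<longleftrightarrow> p \<in> places W"
  "FTrans \<in> Flu"
  by (auto simp: Flu_def)

lemma val_simps[simp]: "val i (FPlace p) = BV (0 < M i p)" "val i FTrans = BV True"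
  "\<eta> i v = Some c \<Longrightarrow> val i (FVar v) = Val c" "\<eta> i v = None \<Longrightarrow> val i (FVar v) = Null"
  by (auto simp: val_def)

lemma eta_none: "i < l \<Longrightarrow> wr W (tr i) v = Some {} \<Longrightarrow> \<eta> (Suc i) v = None"
  using stp(5)[of i v] by simp

lemma eta_some: "i < l \<Longrightarrow> wr W (tr i) v = Some X \<Longrightarrow> X \<noteq> {} \<Longrightarrow> \<exists>d\<in>X. \<eta> (Suc i) v = Some d"
  using stp(5)[of i v] by simp

lemma eta_same: "i < l \<Longrightarrow> wr W (tr i) v = None \<Longrightarrow> \<eta> (Suc i) v = \<eta> i v"
  using stp(5)[of i v] by simp

lemma wr_adm': "t \<in> trans W \<Longrightarrow> wr W t v = Some X \<Longrightarrow> d \<in> X \<Longrightarrow> d \<in> adm W v"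
  using wr_adm by blast

lemma start_places: "pstart W \<in> places W"
  using wf unfolding wf_dawnet_def by blast

lemma guard_ok:
  assumes "i < l" "t \<in> trans W" "\<not> guard_trivial W t" "c \<in> set (\<phi> t)"
    "Pos (i, Act t) \<in> S" "\<forall>a\<in>set c. Pos (i, tr_dnf_term a) \<in> S"
  shows False
proof -
  have t: "t = tr i" using assms(5) by (simp add: memPosA)
  have "\<forall>a\<in>set c. dnf_term_sat (\<eta> i) a"
  proof
    fix a assume "a \<in> set c"
    then have "Pos (i, tr_dnf_term a) \<in> S" using assms(6) by blast
    then show "dnf_term_sat (\<eta> i) a"
      by (cases a) (auto simp: memPos val_def split: option.splits)
  qed
  then have "dnf_sat (\<eta> i) (\<phi> t)" unfolding dnf_sat_def using assms(4) by blast
  moreover have "valid_neg_guard_dnf W t (\<phi> t)" using dnf assms(2,3) by blast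
  ultimately have "\<not> gsat (dmodel W) (\<eta> i) (gd W t)"
    using is_asg[of i] assms(1) unfolding valid_neg_guard_dnf_def by auto
  then show False using stp(3)[OF assms(1)] t by simp
qed

lemma pre_pos: "i < l \<Longrightarrow> p \<in> preset W (tr i) \<Longrightarrow> 0 < M i p"
  using stp(2)[of i] by blast

lemma case7:
  assumes "i < l" "wr W (tr i) v = Some X" "X \<noteq> {}" "x \<in> {Null} \<union> Val ` (adm W v - X)"
  shows "Neg (Suc i, FAt (FVar v) x) \<in> S"
proof -
  obtain d where d: "d \<in> X" "\<eta> (Suc i) v = Some d" using eta_some[OF assms(1-3)] by blast
  have "v \<in> netvars W" using wr_netvars stp(1)[OF assms(1)] assms(2) by blast
  then show ?thesis using d assms by (auto simp: memNeg bc_fdom_def)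
qed

lemma guard_case:
  assumes "t \<in> trans W" "\<not> guard_trivial W t" "c \<in> set (\<phi> t)"
    "r \<in> law_rules l (Dynamic None (Act t # map tr_dnf_term c) [])" "rpos r \<subseteq> S"
  shows False
proof -
  obtain i where i: "i < l" "rpos r = (\<lambda>A. Pos (i, A)) ` set (Act t # map tr_dnf_term c)"
    using assms(4) by (auto simp: law_rules_def)
  have "Pos (i, Act t) \<in> S" "\<forall>a\<in>set c. Pos (i, tr_dnf_term a) \<in> S" using assms(5) i by auto
  then show False using guard_ok[OF i(1) assms(1-3)] by blast
qed

lemma bc_simps: "fluents (bc W \<phi>) = Flu" "fdom (bc W \<phi>) = bc_fdom W" "actions (bc W \<phi>) = trans W"
    "laws (bc W \<phi>) = bc_laws W \<phi>" by (simp_all add: bc_def Flu_def)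

lemmas mems = memPos memNeg memPosA memNegA law_rules_def hd_lits_def fat_def nfat_def bc_fdom_def

lemma law_ok:
  assumes "law \<in> bc_laws W \<phi>" "r \<in> law_rules l law" "rneg r \<inter> S = {}" "rpos r \<subseteq> S"
  shows "rhead r \<inter> S \<noteq> {}"
  using assms(1) unfolding bc_laws_def
  apply (elim UnE)
  subgoal using assms(2-) by (auto simp: mems)
  subgoal using assms(2-) by (auto simp: mems)
  subgoal using assms(2-) M_pre pre_places by (auto simp: mems)
  subgoal using assms(2-) M_post post_places by (auto simp: mems)
  subgoal using assms(2-) wr_netvars wr_adm' by (auto simp: mems)
  subgoal using assms(2-) wr_netvars eta_none by (auto simp: mems)
  subgoal using assms(2-) apply (auto simp: law_rules_def hd_lits_def nfat_def fat_def memPosA)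
    using case7 by blast+
  subgoal using assms(2-) by (auto simp: mems)
  subgoal using assms(2-) apply (auto simp: mems)
    using pre_pos by fastforce
  subgoal using assms(2-) by (auto simp: mems)
  subgoal using assms(2-) start_places by (auto simp: mems init)
  subgoal using assms(2-) by (auto simp: mems init)
  subgoal using assms(2-) by (auto simp: mems init)
  subgoal using assms(2-) by (auto simp: mems init)
  subgoal using assms(2-) guard_case by blast
  done

lemma closed1:
  assumes "r \<in> prog l (bc W \<phi>)" "rneg r \<inter> S = {}" "rpos r \<subseteq> S" shows "rhead r \<inter> S \<noteq> {}"
proof -
  have F: "fluents (bc W \<phi>) = Flu" "fdom (bc W \<phi>) = bc_fdom W" "actions (bc W \<phi>) = trans W"
    "laws (bc W \<phi>) = bc_laws W \<phi>" by (simp_all add: bc_def Flu_def)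
  from assms(1) consider (a) law where "law \<in> bc_laws W \<phi>" "r \<in> law_rules l law"
    | (b) f x where "r = \<lparr>rhead = {fat 0 (f, x), nfat 0 (f, x)}, rpos = {}, rneg = {}\<rparr>" "f \<in> Flu" "x \<in> bc_fdom W f"
    | (c) i a where "r = \<lparr>rhead = {Pos (i, Act a), Neg (i, Act a)}, rpos = {}, rneg = {}\<rparr>" "a \<in> trans W" "i < l"
    | (d) i f where "r = \<lparr>rhead = {}, rpos = {}, rneg = (\<lambda>x. fat i (f, x)) ` bc_fdom W f\<rparr>" "f \<in> Flu" "i \<le> l"
    | (e) i f x y where "r = \<lparr>rhead = {nfat i (f, x)}, rpos = {fat i (f, y)}, rneg = {}\<rparr>" "f \<in> Flu"
        "x \<in> bc_fdom W f" "y \<in> bc_fdom W f" "x \<noteq> y" "i \<le> l"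
    unfolding prog_def F by blast
  then show ?thesis
  proof cases
    case a then show ?thesis using law_ok assms(2,3) by blast
  next
    case b then show ?thesis by (cases "x = val 0 f") (auto simp: fat_def nfat_def memPos memNeg)
  next
    case c then show ?thesis using stp(1)[OF c(3)] by (cases "a = tr i") (auto simp: memPosA memNegA)
  next
    case d then have "fat i (f, val i f) \<in> rneg r \<inter> S" using val_dom by (auto simp: fat_def memPos)
    then show ?thesis using assms(2) by blast
  next
    case e then show ?thesis using assms(3) by (auto simp: fat_def nfat_def memPos memNeg)
  qed
qed

lemma minimal:
  assumes sub: "S' \<subseteq> S"
    and cl: "\<And>r. r \<in> prog l (bc W \<phi>) \<Longrightarrow> rneg r \<inter> S = {} \<Longrightarrow> rpos r \<subseteq> S' \<Longrightarrow> rhead r \<inter> S' \<noteq> {}"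
  shows "S \<subseteq> S'"
proof -
  have der: "a \<in> S'" if "r \<in> prog l (bc W \<phi>)" "rneg r \<inter> S = {}" "rpos r \<subseteq> S'" "rhead r = {a}" for r a
    using cl[OF that(1-3)] that(4) by auto
  have lawin: "r \<in> prog l (bc W \<phi>)" if "law \<in> bc_laws W \<phi>" "r \<in> law_rules l law" for law r
    using that by (auto simp: prog_def bc_def)
  have dyn: "\<lparr>rhead = hd_lits (Suc i) h, rpos = (\<lambda>A. Pos (i, A)) ` set aft, rneg = nfat (Suc i) ` set ifc\<rparr>
      \<in> law_rules l (Dynamic h aft ifc)" if "i < l" for i h aft ifc
    using that by (auto simp: law_rules_def)
  have ini: "\<lparr>rhead = {fat 0 (f, x)}, rpos = {}, rneg = {}\<rparr> \<in> law_rules l (Initially f x)" for f x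
    by (simp add: law_rules_def)
  have PA: "Pos (i, Act (tr i)) \<in> S'" if "i < l" for i
  proof -
    have "\<lparr>rhead = {Pos (i, Act (tr i)), Neg (i, Act (tr i))}, rpos = {}, rneg = {}\<rparr> \<in> prog l (bc W \<phi>)"
      using that stp(1)[OF that] by (auto simp: prog_def bc_def)
    from cl[OF this] have "{Pos (i, Act (tr i)), Neg (i, Act (tr i))} \<inter> S' \<noteq> {}" by simp
    moreover have "Neg (i, Act (tr i)) \<notin> S'" using sub memNegA by blast
    ultimately show ?thesis by blast
  qed
  have NA: "Neg (i, Act a) \<in> S'" if "Neg (i, Act a) \<in> S" for i a
  proof -
    have h: "i < l" "a \<in> trans W" "a \<noteq> tr i" using that by (auto simp: memNegA)
    have "\<lparr>rhead = {Pos (i, Act a), Neg (i, Act a)}, rpos = {}, rneg = {}\<rparr> \<in> prog l (bc W \<phi>)"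
      using h by (auto simp: prog_def bc_def)
    from cl[OF this] have "{Pos (i, Act a), Neg (i, Act a)} \<inter> S' \<noteq> {}" by simp
    moreover have "Pos (i, Act a) \<notin> S'" using sub memPosA h by blast
    ultimately show ?thesis by blast
  qed
  have PF: "Pos (i, FAt f (val i f)) \<in> S'" if "i \<le> l" "f \<in> Flu" for i f
    using that
  proof (induction i arbitrary: f)
    case 0
    show ?case
    proof (cases f)
      case (FVar v)
      have "Initially (FVar v) Null \<in> bc_laws W \<phi>" using 0 FVar by (auto simp: bc_laws_def)
      then have "fat 0 (FVar v, Null) \<in> S'" by (rule der[OF lawin[OF _ ini]]) auto
      then show ?thesis using FVar init by (simp add: fat_def)
    next
      case (FPlace p)
      show ?thesis
      proof (cases "p = pstart W")
        case True
        have "Initially (FPlace (pstart W)) (BV True) \<in> bc_laws W \<phi>" by (auto simp: bc_laws_def)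
        then have "fat 0 (FPlace (pstart W), BV True) \<in> S'" by (rule der[OF lawin[OF _ ini]]) auto
        then show ?thesis using FPlace True init by (simp add: fat_def)
      next
        case False
        have "Initially (FPlace p) (BV False) \<in> bc_laws W \<phi>" using 0 FPlace False by (auto simp: bc_laws_def)
        then have "fat 0 (FPlace p, BV False) \<in> S'" by (rule der[OF lawin[OF _ ini]]) auto
        then show ?thesis using FPlace False init by (simp add: fat_def)
      qed
    next
      case FTrans
      have "Initially FTrans (BV True) \<in> bc_laws W \<phi>" by (auto simp: bc_laws_def)
      then have "fat 0 (FTrans, BV True) \<in> S'" by (rule der[OF lawin[OF _ ini]]) auto
      then show ?thesis using FTrans by (simp add: fat_def)
    qed
  next
    case (Suc i)
    have il: "i < l" using Suc.prems by simp
    have pa: "Pos (i, Act (tr i)) \<in> S'" using PA il by blast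
    have ti: "tr i \<in> trans W" using stp(1)[OF il] .
    show ?case
    proof (cases f)
      case FTrans
      have "Dynamic (Some (FTrans, BV True)) [Act (tr i)] [] \<in> bc_laws W \<phi>" using ti by (auto simp: bc_laws_def)
      then have "fat (Suc i) (FTrans, BV True) \<in> S'"
        by (rule der[OF lawin[OF _ dyn[OF il]]]) (use pa in \<open>auto simp: hd_lits_def\<close>)
      then show ?thesis using FTrans by (simp add: fat_def)
    next
      case (FPlace p)
      have pp: "p \<in> places W" using Suc.prems FPlace by simp
      consider (pre) "p \<in> preset W (tr i) - postset W (tr i)" | (post) "p \<in> postset W (tr i) - preset W (tr i)"
        | (nn) "p \<notin> preset W (tr i) - postset W (tr i)" "p \<notin> postset W (tr i) - preset W (tr i)" by blast
      then show ?thesis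
      proof cases
        case pre
        have "Dynamic (Some (FPlace p, BV False)) [Act (tr i)] [] \<in> bc_laws W \<phi>" using ti pre by (auto simp: bc_laws_def)
        then have "fat (Suc i) (FPlace p, BV False) \<in> S'"
          by (rule der[OF lawin[OF _ dyn[OF il]]]) (use pa in \<open>auto simp: hd_lits_def\<close>)
        then show ?thesis using FPlace M_pre[OF il pre] by (simp add: fat_def)
      next
        case post
        have "Dynamic (Some (FPlace p, BV True)) [Act (tr i)] [] \<in> bc_laws W \<phi>" using ti post by (auto simp: bc_laws_def)
        then have "fat (Suc i) (FPlace p, BV True) \<in> S'"
          by (rule der[OF lawin[OF _ dyn[OF il]]]) (use pa in \<open>auto simp: hd_lits_def\<close>)
        then show ?thesis using FPlace M_post[OF il post] by (simp add: fat_def)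
      next
        case nn
        define b where "b = (0 < M i p)"
        have eq: "M (Suc i) p = M i p" using M_same[OF il nn] .
        have ih: "Pos (i, FAt (FPlace p) (BV b)) \<in> S'" using Suc.IH[of "FPlace p"] il pp by (simp add: b_def)
        have "Dynamic (Some (FPlace p, BV b)) [FAt (FPlace p) (BV b)] [(FPlace p, BV b)] \<in> bc_laws W \<phi>"
          using pp by (auto simp: bc_laws_def)
        then have "fat (Suc i) (FPlace p, BV b) \<in> S'"
          by (rule der[OF lawin[OF _ dyn[OF il]]]) (use ih eq in \<open>auto simp: hd_lits_def nfat_def memNeg b_def\<close>)
        then show ?thesis using FPlace eq by (simp add: fat_def b_def)
      qed
    next
      case (FVar v)
      have vn: "v \<in> netvars W" using Suc.prems FVar by simp
      show ?thesis
      proof (cases "wr W (tr i) v")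
        case None
        define x where "x = val i (FVar v)"
        have eq: "val (Suc i) (FVar v) = x" using eta_same[OF il None] by (simp add: x_def val_def)
        have xd: "x \<in> bc_fdom W (FVar v)" using val_dom[of i "FVar v"] il vn by (simp add: x_def)
        have ih: "Pos (i, FAt (FVar v) x) \<in> S'" using Suc.IH[of "FVar v"] il vn by (simp add: x_def)
        have "Dynamic (Some (FVar v, x)) [FAt (FVar v) x] [(FVar v, x)] \<in> bc_laws W \<phi>"
          using vn xd by (auto simp: bc_laws_def)
        then have "fat (Suc i) (FVar v, x) \<in> S'"
          by (rule der[OF lawin[OF _ dyn[OF il]]]) (use ih eq in \<open>auto simp: hd_lits_def nfat_def memNeg\<close>)
        then show ?thesis using FVar eq by (simp add: fat_def)
      next
        case (Some X)
        show ?thesis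
        proof (cases "X = {}")
          case True
          have "Dynamic (Some (FVar v, Null)) [Act (tr i)] [] \<in> bc_laws W \<phi>" using ti Some True by (auto simp: bc_laws_def)
          then have "fat (Suc i) (FVar v, Null) \<in> S'"
            by (rule der[OF lawin[OF _ dyn[OF il]]]) (use pa in \<open>auto simp: hd_lits_def\<close>)
          then show ?thesis using FVar eta_none[OF il] Some True by (simp add: fat_def)
        next
          case False
          obtain d where d: "d \<in> X" "\<eta> (Suc i) v = Some d" using eta_some[OF il Some False] by blast
          have "Dynamic (Some (FVar v, Val d)) [Act (tr i)] [(FVar v, Val d)] \<in> bc_laws W \<phi>"
            using ti Some d by (auto simp: bc_laws_def)
          then have "fat (Suc i) (FVar v, Val d) \<in> S'"
            by (rule der[OF lawin[OF _ dyn[OF il]]]) (use pa d in \<open>auto simp: hd_lits_def nfat_def memNeg\<close>)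
          then show ?thesis using FVar d by (simp add: fat_def)
        qed
      qed
    qed
  qed
  show ?thesis
  proof
    fix a assume aS: "a \<in> S"
    obtain i A where "a = Pos (i, A) \<or> a = Neg (i, A)" by (cases a) auto
    then show "a \<in> S'"
    proof
      assume a: "a = Pos (i, A)"
      show ?thesis
      proof (cases A)
        case (FAt f x) then show ?thesis using aS a PF by (auto simp: memPos)
      next
        case (Act b) then show ?thesis using aS a PA by (auto simp: memPosA)
      qed
    next
      assume a: "a = Neg (i, A)"
      show ?thesis
      proof (cases A)
        case (FAt f x)
        then have h: "i \<le> l" "f \<in> Flu" "x \<in> bc_fdom W f" "x \<noteq> val i f" using aS a by (auto simp: memNeg)
        have "\<lparr>rhead = {nfat i (f, x)}, rpos = {fat i (f, val i f)}, rneg = {}\<rparr> \<in>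
          {\<lparr>rhead = {nfat i (f, x)}, rpos = {fat i (f, y)}, rneg = {}\<rparr> | i f x y.
         f \<in> fluents (bc W \<phi>) \<and> x \<in> fdom (bc W \<phi>) f \<and> y \<in> fdom (bc W \<phi>) f \<and> x \<noteq> y \<and> i \<le> l}"
          using h val_dom[OF h(1,2)] unfolding bc_simps by fastforce
        then have "\<lparr>rhead = {nfat i (f, x)}, rpos = {fat i (f, val i f)}, rneg = {}\<rparr> \<in> prog l (bc W \<phi>)"
          unfolding prog_def by blast
        then have "nfat i (f, x) \<in> S'" by (rule der) (use PF h in \<open>auto simp: fat_def\<close>)
        then show ?thesis using a FAt by (simp add: nfat_def)
      next
        case (Act b) then show ?thesis using aS a NA by auto
      qed
    qed
  qed
qed

lemma main_ans: "answer_set (prog l (bc W \<phi>)) (\<Union>i\<in>{0..l}. Phi W l M \<eta> tr i)"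
proof -
  have SS: "(\<Union>i\<in>{0..l}. Phi W l M \<eta> tr i) = S" by (simp add: S_def)
  show ?thesis unfolding SS answer_set_def cl_reduct
    using closed1 cons minimal by blast
qed

end

theorem mainTheorem4:
  fixes W :: "('v, 'd, 'p, 't) dawnet"
    and \<phi> :: "'t \<Rightarrow> ('v, 'd) dnf_term list list"
    and l :: nat
    and M :: "nat \<Rightarrow> 'p \<Rightarrow> nat"
    and \<eta> :: "nat \<Rightarrow> ('v, 'd) assignment"
    and tr :: "nat \<Rightarrow> 't"
  assumes "wf_dawnet W"
    and "one_safe W"
    and "\<forall>t\<in>trans W. \<not> guard_trivial W t \<longrightarrow> valid_neg_guard_dnf W t (\<phi> t)"
    and "is_run W l M \<eta> tr"
  shows "answer_set (prog l (bc W \<phi>)) (\<Union>i\<in>{0..l}. Phi W l M \<eta> tr i)"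
  by (rule runctx.main_ans[OF runctx.intro[OF assms]])

end
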